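(* Let $H$ be a transitive subgroup of $\operatorname{Sym}_n$ and let $S=S_n(H)$. Then $\bigcup_{i=1}^n Sa_i^2S$ is not a prime ideal of $S$.
   Context: $S_n(H)$ is the monoid with presentation $\langle a_1,\dots,a_n \mid a_1\cdots a_n = a_{\sigma(1)}\cdots a_{\sigma(n)},\ \sigma\in H\rangle$. An ideal $Q$ of a monoid $S$ is prime if $Q\neq S$ and, for $u,v\in S$, $uSv\subseteq Q$ implies $u\in Q$ or $v\in Q$. *)

theory Defs
  imports "HOL-Algebra.Sym_Groups"
begin

text \<open>Words over the generators a_1,...,a_n, represented as lists over {1..n}.\<close>
definition words :: "nat \<Rightarrow> nat list set" where
  "words n = {w. set w \<subseteq> {1..n}}"

inductive_set Sn_rel :: "nat \<Rightarrow> (nat \<Rightarrow> nat) set \<Rightarrow> (nat list \<times> nat list) set"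
  for n :: nat and H :: "(nat \<Rightarrow> nat) set" where
  refl: "w \<in> words n \<Longrightarrow> (w, w) \<in> Sn_rel n H"
| rel: "\<lbrakk>\<sigma> \<in> H; u \<in> words n; v \<in> words n\<rbrakk> \<Longrightarrow>
          (u @ [1..<Suc n] @ v, u @ map \<sigma> [1..<Suc n] @ v) \<in> Sn_rel n H"
| sym: "(x, y) \<in> Sn_rel n H \<Longrightarrow> (y, x) \<in> Sn_rel n H"
| trans: "\<lbrakk>(x, y) \<in> Sn_rel n H; (y, z) \<in> Sn_rel n H\<rbrakk> \<Longrightarrow> (x, z) \<in> Sn_rel n H"

definition Sn :: "nat \<Rightarrow> (nat \<Rightarrow> nat) set \<Rightarrow> nat list set set" where
  "Sn n H = words n // Sn_rel n H"

definition Sn_cls :: "nat \<Rightarrow> (nat \<Rightarrow> nat) set \<Rightarrow> nat list \<Rightarrow> nat list set" where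
  "Sn_cls n H w = Sn_rel n H `` {w}"

definition Sn_mult :: "nat \<Rightarrow> (nat \<Rightarrow> nat) set \<Rightarrow> nat list set \<Rightarrow> nat list set \<Rightarrow> nat list set" where
  "Sn_mult n H X Y = (\<Union>x\<in>X. \<Union>y\<in>Y. Sn_cls n H (x @ y))"

definition Sn_gen :: "nat \<Rightarrow> (nat \<Rightarrow> nat) set \<Rightarrow> nat \<Rightarrow> nat list set" where
  "Sn_gen n H i = Sn_cls n H [i]"

definition monoid_ideal :: "'a set \<Rightarrow> ('a \<Rightarrow> 'a \<Rightarrow> 'a) \<Rightarrow> 'a set \<Rightarrow> bool" where
  "monoid_ideal S m Q \<longleftrightarrow> Q \<subseteq> S \<and> (\<forall>s\<in>S. \<forall>q\<in>Q. m s q \<in> Q \<and> m q s \<in> Q)"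

definition prime_monoid_ideal :: "'a set \<Rightarrow> ('a \<Rightarrow> 'a \<Rightarrow> 'a) \<Rightarrow> 'a set \<Rightarrow> bool" where
  "prime_monoid_ideal S m Q \<longleftrightarrow> monoid_ideal S m Q \<and> Q \<noteq> S \<and>
     (\<forall>u\<in>S. \<forall>v\<in>S. (\<forall>s\<in>S. m (m u s) v \<in> Q) \<longrightarrow> u \<in> Q \<or> v \<in> Q)"

end

theory Submission
  imports Defs
begin

abbreviation "D n \<equiv> [1..<Suc n]"

lemma perm_H:
  assumes "subgroup H (sym_group n)" "\<sigma> \<in> H"
  shows "\<sigma> permutes {1..n}"
proof -
  have "H \<subseteq> carrier (sym_group n)" using assms(1) subgroup.subset by blast
  thus ?thesis using assms(2) by (auto simp: sym_group_def)
qed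

lemma map_words:
  assumes "\<sigma> permutes {1..n}" shows "map \<sigma> (D n) \<in> words n"
proof -
  have "set (D n) = {1..n}" by auto
  then show ?thesis using permutes_image[OF assms] by (simp add: words_def del: upt_Suc)
qed

lemma D_words: "D n \<in> words n" by (auto simp: words_def)

lemma R_words:
  assumes "subgroup H (sym_group n)"
  shows "(x,y) \<in> Sn_rel n H \<Longrightarrow> x \<in> words n \<and> y \<in> words n"
proof (induction rule: Sn_rel.induct)
  case (rel \<sigma> u v)
  then have "map \<sigma> (D n) \<in> words n" using map_words perm_H assms by blast
  with rel D_words show ?case by (auto simp: words_def)
qed auto

lemma R_app:
  assumes "subgroup H (sym_group n)"
  shows "(x,x') \<in> Sn_rel n H \<Longrightarrow> y \<in> words n \<Longrightarrow> (x@y, x'@y) \<in> Sn_rel n H \<and> (y@x, y@x') \<in> Sn_rel n H"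
proof (induction rule: Sn_rel.induct)
  case (refl w)
  then have "w@y \<in> words n" "y@w \<in> words n" by (auto simp: words_def)
  then show ?case by (auto intro: Sn_rel.refl)
next
  case (rel \<sigma> u v)
  have "v@y \<in> words n" "y@u \<in> words n" using rel by (auto simp: words_def)
  then show ?case using Sn_rel.rel[OF rel(1) rel(2) \<open>v@y \<in> words n\<close>]
      Sn_rel.rel[OF rel(1) \<open>y@u \<in> words n\<close> rel(3)] by simp
next
  case (sym x y) then show ?case by (auto intro: Sn_rel.sym)
next
  case (trans x y z) then show ?case by (meson Sn_rel.trans)
qed

lemma cls_eq: "(a,b) \<in> Sn_rel n H \<Longrightarrow> Sn_cls n H a = Sn_cls n H b"
  unfolding Sn_cls_def by (auto intro: Sn_rel.trans Sn_rel.sym)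

lemma mult_cls:
  assumes "subgroup H (sym_group n)" "x \<in> words n" "y \<in> words n"
  shows "Sn_mult n H (Sn_cls n H x) (Sn_cls n H y) = Sn_cls n H (x@y)"
proof
  show "Sn_mult n H (Sn_cls n H x) (Sn_cls n H y) \<subseteq> Sn_cls n H (x@y)"
  proof
    fix z assume "z \<in> Sn_mult n H (Sn_cls n H x) (Sn_cls n H y)"
    then obtain x' y' where x': "(x,x') \<in> Sn_rel n H" and y': "(y,y') \<in> Sn_rel n H"
      and z: "z \<in> Sn_cls n H (x'@y')" unfolding Sn_mult_def Sn_cls_def by auto
    have "x' \<in> words n" using R_words[OF assms(1) x'] by simp
    have "(x@y, x'@y) \<in> Sn_rel n H" using R_app[OF assms(1) x' assms(3)] by simp
    moreover have "(x'@y, x'@y') \<in> Sn_rel n H" using R_app[OF assms(1) y' \<open>x' \<in> words n\<close>] by simp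
    ultimately have "(x@y, x'@y') \<in> Sn_rel n H" by (rule Sn_rel.trans)
    then show "z \<in> Sn_cls n H (x@y)" using z cls_eq by metis
  qed
next
  have "x \<in> Sn_cls n H x" "y \<in> Sn_cls n H y" using assms
    by (auto simp: Sn_cls_def intro: Sn_rel.refl)
  then show "Sn_cls n H (x@y) \<subseteq> Sn_mult n H (Sn_cls n H x) (Sn_cls n H y)"
    unfolding Sn_mult_def by blast
qed

lemma R_inv:
  assumes "subgroup H (sym_group n)"
  shows "(x,y) \<in> Sn_rel n H \<Longrightarrow> length x = length y \<and> (length x = n \<longrightarrow> distinct x = distinct y)"
proof (induction rule: Sn_rel.induct)
  case (rel \<sigma> u v)
  have p: "\<sigma> permutes {1..n}" using perm_H assms rel by blast
  then have "inj_on \<sigma> {1..n}" by (rule permutes_inj_on)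
  then have "distinct (map \<sigma> (D n))" proof -
    have "set (D n) = {1..n}" by auto
    with \<open>inj_on \<sigma> {1..n}\<close> show ?thesis by (simp add: distinct_map del: upt_Suc)
  qed
  then show ?case by auto
qed auto

lemma Sn_elem: "X \<in> Sn n H \<Longrightarrow> \<exists>w\<in>words n. X = Sn_cls n H w"
  unfolding Sn_def Sn_cls_def quotient_def by auto

lemma cls_in: "w \<in> words n \<Longrightarrow> Sn_cls n H w \<in> Sn n H"
  unfolding Sn_def Sn_cls_def quotient_def by auto

lemma e1: "n \<ge> 1 \<Longrightarrow> D n = [1..<n] @ [n]" by simp
lemma e2: "n \<ge> 1 \<Longrightarrow> D n = 1 # [2..<Suc n]"
  using upt_conv_Cons[of 1 "Suc n"] by (simp del: upt_Suc add: numeral_2_eq_2)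

lemma case_nil:
  assumes "n \<ge> 1" "\<sigma> \<in> H" "\<sigma> 1 = n"
  shows "(D n @ D n, [1..<n] @ [n,n] @ map \<sigma> [2..<Suc n]) \<in> Sn_rel n H"
proof -
  have r: "(D n @ D n @ [], D n @ map \<sigma> (D n) @ []) \<in> Sn_rel n H"
    by (rule Sn_rel.rel[OF assms(2)]) (auto simp: words_def)
  have "D n @ map \<sigma> (D n) = ([1..<n] @ [n]) @ map \<sigma> (1 # [2..<Suc n])"
    using e1[OF assms(1)] e2[OF assms(1)] by (metis (no_types))
  also have "\<dots> = [1..<n] @ [n,n] @ map \<sigma> [2..<Suc n]"
    using assms(3) by (simp del: upt_Suc)
  finally show ?thesis using r by (simp del: upt_Suc)
qed

lemma case_cons:
  assumes "n \<ge> 1" "\<sigma> \<in> H" "\<sigma> n = j" "j#w' \<in> words n"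
  shows "(D n @ (j#w') @ D n, map \<sigma> [1..<n] @ [j,j] @ w' @ D n) \<in> Sn_rel n H"
proof -
  have r: "([] @ D n @ ((j#w') @ D n), [] @ map \<sigma> (D n) @ ((j#w') @ D n)) \<in> Sn_rel n H"
    by (rule Sn_rel.rel[OF assms(2)]) (use assms(4) in \<open>auto simp: words_def\<close>)
  have "map \<sigma> (D n) @ ((j#w') @ D n) = map \<sigma> ([1..<n] @ [n]) @ ((j#w') @ D n)"
    using e1[OF assms(1)] by (metis (no_types))
  also have "\<dots> = map \<sigma> [1..<n] @ [j,j] @ w' @ D n"
    using assms(3) by (simp del: upt_Suc)
  finally show ?thesis using r by (simp del: upt_Suc)
qed

theorem lemma4p4:
  fixes n :: nat and H :: "(nat \<Rightarrow> nat) set"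
  assumes "n \<ge> 1"
    and "subgroup H (sym_group n)"
    and "\<forall>i\<in>{1..n}. \<forall>j\<in>{1..n}. \<exists>\<sigma>\<in>H. \<sigma> i = j"
  shows "\<not> prime_monoid_ideal (Sn n H) (Sn_mult n H)
           (\<Union>i\<in>{1..n}. {Sn_mult n H (Sn_mult n H s (Sn_mult n H (Sn_gen n H i) (Sn_gen n H i))) t
                          | s t. s \<in> Sn n H \<and> t \<in> Sn n H})"
    (is "\<not> prime_monoid_ideal _ _ ?Q")
proof
  assume pr: "prime_monoid_ideal (Sn n H) (Sn_mult n H) ?Q"
  let ?m = "Sn_mult n H" and ?c = "Sn_cls n H"
  have G: "subgroup H (sym_group n)" by fact
  have prod: "?m (?m (?c s) (?m (Sn_gen n H i) (Sn_gen n H i))) (?c t) = ?c (s@[i,i]@t)"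
    if "s \<in> words n" "t \<in> words n" "i \<in> {1..n}" for s t i
  proof -
    have iw: "[i] \<in> words n" using that by (auto simp: words_def)
    have "?m (Sn_gen n H i) (Sn_gen n H i) = ?c [i,i]"
      unfolding Sn_gen_def using mult_cls[OF G iw iw] by simp
    moreover have "[i,i] \<in> words n" using that by (auto simp: words_def)
    ultimately show ?thesis using mult_cls[OF G] that by (simp add: words_def)
  qed
  have inQ: "?c (s@[i,i]@t) \<in> ?Q" if "s \<in> words n" "t \<in> words n" "i \<in> {1..n}" for s t i
    using prod[OF that] cls_in[OF that(1)] cls_in[OF that(2)] that(3) by blast
  have notQ: "?c (D n) \<notin> ?Q"
  proof
    assume "?c (D n) \<in> ?Q"
    then obtain i s t where i: "i \<in> {1..n}" and s: "s \<in> Sn n H" and t: "t \<in> Sn n H"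
      and eq: "?c (D n) = ?m (?m s (?m (Sn_gen n H i) (Sn_gen n H i))) t" by blast
    obtain s' where s': "s' \<in> words n" "s = ?c s'" using Sn_elem[OF s] by blast
    obtain t' where t': "t' \<in> words n" "t = ?c t'" using Sn_elem[OF t] by blast
    have "?c (D n) = ?c (s'@[i,i]@t')" using eq prod[OF s'(1) t'(1) i] s' t' by simp
    moreover have "D n \<in> ?c (D n)" using D_words[of n] Sn_rel.refl[of "D n" n H] by (simp add: Sn_cls_def del: upt_Suc)
    ultimately have "(s'@[i,i]@t', D n) \<in> Sn_rel n H" by (auto simp: Sn_cls_def)
    from R_inv[OF G this] show False by (simp del: upt_Suc)
  qed
  have all: "?m (?m (?c (D n)) x) (?c (D n)) \<in> ?Q" if xS: "x \<in> Sn n H" for x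
  proof -
    obtain w where w: "w \<in> words n" "x = ?c w" using Sn_elem[OF xS] by blast
    have e: "?m (?m (?c (D n)) x) (?c (D n)) = ?c (D n @ w @ D n)"
    proof -
      have dw: "D n @ w \<in> words n" using w(1) D_words[of n] by (simp add: words_def del: upt_Suc)
      show ?thesis using w(2) mult_cls[OF G D_words w(1)] mult_cls[OF G dw D_words] by (simp del: upt_Suc)
    qed
    show ?thesis
    proof (cases w)
      case Nil
      obtain \<sigma> where \<sigma>: "\<sigma> \<in> H" "\<sigma> 1 = n" using assms(1,3) by force
      have p: "\<sigma> permutes {1..n}" using perm_H G \<sigma> by blast
      have r: "(D n @ D n, [1..<n] @ [n,n] @ map \<sigma> [2..<Suc n]) \<in> Sn_rel n H"
        by (rule case_nil[OF assms(1) \<sigma>])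
      have w1: "map \<sigma> [2..<Suc n] \<in> words n"
        proof -
        have "\<forall>x\<in>{2..<Suc n}. \<sigma> x \<in> {1..n}" using permutes_in_image[OF p] by (auto simp del: upt_Suc)
        then show ?thesis unfolding words_def by (auto simp del: upt_Suc)
      qed
      have w2: "[1..<n] \<in> words n" by (auto simp: words_def)
      have "n \<in> {1..n}" using assms(1) by simp
      then have "?c ([1..<n] @ [n,n] @ map \<sigma> [2..<Suc n]) \<in> ?Q" by (rule inQ[OF w2 w1])
      then have "?c (D n @ D n) \<in> ?Q" using cls_eq[OF r] by (simp del: upt_Suc)
      then show ?thesis using e Nil by (simp del: upt_Suc)
    next
      case (Cons j w')
      then have j: "j \<in> {1..n}" and w'w: "w' \<in> words n" using w by (auto simp: words_def)
      obtain \<sigma> where \<sigma>: "\<sigma> \<in> H" "\<sigma> n = j" using assms(1,3) j by force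
      have p: "\<sigma> permutes {1..n}" using perm_H G \<sigma> by blast
      have r: "(D n @ (j#w') @ D n, map \<sigma> [1..<n] @ [j,j] @ w' @ D n) \<in> Sn_rel n H"
        using case_cons[OF assms(1) \<sigma>] w Cons by blast
      have w1: "map \<sigma> [1..<n] \<in> words n"
        proof -
        have "\<forall>x\<in>{1..<n}. \<sigma> x \<in> {1..n}" using permutes_in_image[OF p] by (auto simp del: upt_Suc)
        then show ?thesis unfolding words_def by (auto simp del: upt_Suc)
      qed
      have w2: "w' @ D n \<in> words n" using w'w D_words[of n] by (simp add: words_def del: upt_Suc)
      have "?c (map \<sigma> [1..<n] @ [j,j] @ (w' @ D n)) \<in> ?Q" by (rule inQ[OF w1 w2 j])
      then have "?c (D n @ w @ D n) \<in> ?Q" using cls_eq[OF r] Cons by (simp del: upt_Suc)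
      then show ?thesis using e by (simp del: upt_Suc)
    qed
  qed
  have "?c (D n) \<in> Sn n H" using cls_in D_words by blast
  with pr all notQ show False unfolding prime_monoid_ideal_def by blast
qed

end
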